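(* If $\gamma<\frac14$ and $|\mu_r-\mu_s|\ge c\frac{\phi_\ast}{n_s}$ for all $r\ne s$, then $$\rho^s_{in}\le\frac{2}{(1-4\gamma)c}\quad\text{and}\quad\rho^s_{out}\le\frac{2}{(1-4\gamma)c}.$$
   Context: Points $x_1,\dots,x_N$ are real numbers, each drawn from one of $\beta$ distributions with distinct means $\mu_1,\dots,\mu_\beta$; $\mathcal T_s$ is the set of points from distribution $s$, $n_s=|\mathcal T_s|$; $\phi_\ast=\sum_i|x_i-\mathbb{E}(x_i)|$; $c>0$ a constant. $\nu_1,\dots,\nu_\beta$ are real cluster centers and $S_r=\{x_i:|x_i-\nu_r|\le|x_i-\nu_s|\ \forall s\}$. $\Delta_s=|\mu_s-\nu_s|$, $\gamma=\max_{s,\,r\ne s}\frac{\Delta_s}{|\mu_r-\mu_s|}$. $\rho^s_{in}=\frac{\sum_{r\ne s}|\mathcal T_r\cap S_s|}{n_s}$ (fraction of points misclassified into cluster $s$) and $\rho^s_{out}=\frac{\sum_{r\ne s}|\mathcal T_s\cap S_r|}{n_s}$ (fraction of points of $\mathcal T_s$ misclassified). *)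

theory Defs
  imports "HOL-Analysis.Analysis"
begin

text \<open>Data model: points are indexed by i < N with values x i; lab i < beta is the
  distribution point i was drawn from; mu s is the mean of distribution s
  (so E(x i) = mu (lab i)); nu r are the cluster centres.\<close>

definition T :: "(nat \<Rightarrow> nat) \<Rightarrow> nat \<Rightarrow> nat \<Rightarrow> nat set" where
  "T lab N s = {i. i < N \<and> lab i = s}"

definition ncount :: "(nat \<Rightarrow> nat) \<Rightarrow> nat \<Rightarrow> nat \<Rightarrow> nat" where
  "ncount lab N s = card (T lab N s)"

definition phi_star :: "(nat \<Rightarrow> real) \<Rightarrow> (nat \<Rightarrow> nat) \<Rightarrow> (nat \<Rightarrow> real) \<Rightarrow> nat \<Rightarrow> real" where
  "phi_star x lab mu N = (\<Sum>i<N. \<bar>x i - mu (lab i)\<bar>)"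

definition S :: "(nat \<Rightarrow> real) \<Rightarrow> (nat \<Rightarrow> real) \<Rightarrow> nat \<Rightarrow> nat \<Rightarrow> nat \<Rightarrow> nat set" where
  "S x nu beta N r = {i. i < N \<and> (\<forall>s<beta. \<bar>x i - nu r\<bar> \<le> \<bar>x i - nu s\<bar>)}"

definition Delta :: "(nat \<Rightarrow> real) \<Rightarrow> (nat \<Rightarrow> real) \<Rightarrow> nat \<Rightarrow> real" where
  "Delta mu nu s = \<bar>mu s - nu s\<bar>"

text \<open>The 0 is inserted only so that the maximum is defined when beta = 1; all ratios
  are nonnegative, so it does not change the value when beta >= 2.\<close>
definition gamma :: "(nat \<Rightarrow> real) \<Rightarrow> (nat \<Rightarrow> real) \<Rightarrow> nat \<Rightarrow> real" where
  "gamma mu nu beta = Max (insert 0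
     {Delta mu nu s / \<bar>mu r - mu s\<bar> | s r. s < beta \<and> r < beta \<and> r \<noteq> s})"

definition rho_in :: "(nat \<Rightarrow> real) \<Rightarrow> (nat \<Rightarrow> nat) \<Rightarrow> (nat \<Rightarrow> real) \<Rightarrow> nat \<Rightarrow> nat \<Rightarrow> nat \<Rightarrow> real" where
  "rho_in x lab nu beta N s =
     (\<Sum>r\<in>{..<beta} - {s}. real (card (T lab N r \<inter> S x nu beta N s))) / real (ncount lab N s)"

definition rho_out :: "(nat \<Rightarrow> real) \<Rightarrow> (nat \<Rightarrow> nat) \<Rightarrow> (nat \<Rightarrow> real) \<Rightarrow> nat \<Rightarrow> nat \<Rightarrow> nat \<Rightarrow> real" where
  "rho_out x lab nu beta N s =
     (\<Sum>r\<in>{..<beta} - {s}. real (card (T lab N s \<inter> S x nu beta N r))) / real (ncount lab N s)"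

end

theory Submission
  imports Defs
begin

lemma dcount:
  fixes A :: "nat \<Rightarrow> nat set"
  assumes "finite R" "\<forall>r\<in>R. A r \<subseteq> I" "finite I"
  shows "(\<Sum>r\<in>R. card (A r)) = (\<Sum>i\<in>I. card {r\<in>R. i \<in> A r})"
proof -
  have 1: "card (A r) = (\<Sum>i\<in>I. if i \<in> A r then 1 else 0)" if "r \<in> R" for r
  proof -
    have "A r = {i\<in>I. i \<in> A r}" using assms that by auto
    then show ?thesis using assms(3) by (simp add: sum.If_cases) (metis Int_def inf_commute)
  qed
  have 2: "card {r\<in>R. i \<in> A r} = (\<Sum>r\<in>R. if i \<in> A r then 1 else 0)" for i
    using assms(1) by (simp add: sum.If_cases Int_def)
  show ?thesis using 1 2 by (simp add: sum.swap[of _ R I])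
qed

lemma finish:
  fixes A :: "nat \<Rightarrow> nat set" and x mu :: "nat \<Rightarrow> real"
  assumes "finite R" "\<forall>r\<in>R. A r \<subseteq> {..<N}"
    and bnd: "\<forall>i<N. real (card {r\<in>R. i \<in> A r}) * (a * (c * (\<Sum>i<N. \<bar>x i - mu (lab i)\<bar>) / n)) \<le> \<bar>x i - mu (lab i)\<bar>"
    and pos: "\<forall>i<N. card {r\<in>R. i \<in> A r} > 0 \<longrightarrow> \<bar>x i - mu (lab i)\<bar> > 0"
    and "a > 0" "c > 0" "n \<ge> 0"
  shows "(\<Sum>r\<in>R. real (card (A r))) / n \<le> 1 / (a * c)"
proof -
  define phi where "phi = (\<Sum>i<N. \<bar>x i - mu (lab i)\<bar>)"
  define K where "K = (\<Sum>r\<in>R. real (card (A r)))"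
  have K: "K = (\<Sum>i<N. real (card {r\<in>R. i \<in> A r}))"
    unfolding K_def using dcount[OF assms(1,2)] by (metis finite_lessThan of_nat_sum)
  have KB: "K * (a * (c * phi / n)) \<le> phi"
    unfolding K phi_def sum_distrib_right using bnd by (intro sum_mono) (simp add: phi_def)
  have K0: "K \<ge> 0" unfolding K_def by (simp add: sum_nonneg)
  show ?thesis
  proof (cases "K = 0 \<or> n = 0")
    case True
    then show ?thesis using assms by (auto simp: K_def[symmetric])
  next
    case False
    then have "K > 0" "n > 0" using K0 assms by auto
    have "\<exists>i<N. card {r\<in>R. i \<in> A r} > 0"
    proof (rule ccontr)
      assume "\<not> ?thesis"
      then have "K = 0" unfolding K by (intro sum.neutral) auto
      then show False using \<open>K > 0\<close> by simp
    qed
    then obtain i where i: "i < N" "card {r\<in>R. i \<in> A r} > 0" by blast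
    have "phi > 0" unfolding phi_def
      using pos i by (intro sum_pos2[of _ i]) auto
    have "K * (a * c) * phi / n \<le> phi" using KB by (simp add: field_simps)
    then have "(K * (a * c) / n) * phi \<le> 1 * phi" by simp
    then have "K * (a * c) / n \<le> 1" using \<open>phi > 0\<close> mult_right_le_imp_le by blast
    then show ?thesis using \<open>n > 0\<close> assms by (simp add: K_def[symmetric] field_simps)
  qed
qed

lemma half_chain:
  fixes E A F :: real assumes "0 < E" "A \<le> E / 2" "E \<le> 2 * F" shows "A \<le> F" "0 < F"
  using assms by linarith+

lemma nd_lemma:
  fixes mr nr mq nq G :: real
  assumes "\<bar>mr - mq\<bar> > 0" "\<bar>mr - nr\<bar> \<le> G" "\<bar>mq - nq\<bar> \<le> G" "G < \<bar>mr - mq\<bar> / 2"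
  shows "nr \<noteq> nq"
proof
  assume "nr = nq"
  then have "\<bar>mr - mq\<bar> \<le> \<bar>mr - nr\<bar> + \<bar>mq - nq\<bar>" by (simp add: abs_triangle_ineq4[of "mr - nr" "mq - nr", simplified])
  then show False using assms by (simp add: field_simps)
qed

lemma geo4:
  fixes x np ns mp ms G :: real
  assumes "\<bar>x - ns\<bar> \<ge> \<bar>np - ns\<bar>" "\<bar>mp - np\<bar> \<le> G" "\<bar>ms - ns\<bar> \<le> G"
  shows "\<bar>mp - ms\<bar> - 3 * G \<le> \<bar>x - ms\<bar>"
  using assms by (smt (verit))

lemma geo1:
  fixes x nr ns mr ms G :: real
  assumes "\<bar>x - ns\<bar> \<le> \<bar>x - nr\<bar>" "\<bar>mr - nr\<bar> \<le> G" "\<bar>ms - ns\<bar> \<le> G"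
  shows "\<bar>mr - ms\<bar> - 2 * G \<le> 2 * \<bar>x - mr\<bar>"
  using assms by (smt (verit))

lemma geo2:
  fixes x nr nq ns :: real
  assumes "\<bar>x - nr\<bar> = \<bar>x - nq\<bar>" "nr \<noteq> nq" "\<bar>x - nr\<bar> \<le> \<bar>x - ns\<bar>"
  shows "\<bar>x - ns\<bar> \<ge> \<bar>nr - ns\<bar> \<or> \<bar>x - ns\<bar> \<ge> \<bar>nq - ns\<bar>"
  using assms by (smt (verit))

lemma geo3:
  fixes x a b d :: real
  assumes "\<bar>x - a\<bar> = \<bar>x - b\<bar>" "\<bar>x - a\<bar> = \<bar>x - d\<bar>" "a \<noteq> b" "a \<noteq> d" "b \<noteq> d"
  shows False
  using assms by (smt (verit))

theorem lemma9:
  fixes x :: "nat \<Rightarrow> real" and lab :: "nat \<Rightarrow> nat" and mu nu :: "nat \<Rightarrow> real"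
    and N beta s :: nat and c :: real
  assumes lab_range: "\<forall>i<N. lab i < beta"
    and means_distinct: "inj_on mu {..<beta}"
    and c_pos: "c > 0"
    and s_range: "s < beta"
    and gamma_small: "gamma mu nu beta < 1/4"
    and sep: "\<forall>r<beta. r \<noteq> s \<longrightarrow>
               \<bar>mu r - mu s\<bar> \<ge> c * phi_star x lab mu N / real (ncount lab N s)"
  shows "rho_in x lab nu beta N s \<le> 2 / ((1 - 4 * gamma mu nu beta) * c)
       \<and> rho_out x lab nu beta N s \<le> 2 / ((1 - 4 * gamma mu nu beta) * c)"
proof -
  define g where "g = gamma mu nu beta"
  define n where "n = real (ncount lab N s)"
  define phi where "phi = (\<Sum>i<N. \<bar>x i - mu (lab i)\<bar>)"
  define D0 where "D0 = c * phi / n"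
  define a where "a = (1 - 4 * g) / 2"
  define R where "R = {..<beta} - {s}"
  have fin: "finite {Delta mu nu s / \<bar>mu r - mu s\<bar> | s r. s < beta \<and> r < beta \<and> r \<noteq> s}"
  proof -
    have "{Delta mu nu s / \<bar>mu r - mu s\<bar> | s r. s < beta \<and> r < beta \<and> r \<noteq> s}
      \<subseteq> (\<lambda>(s, r). Delta mu nu s / \<bar>mu r - mu s\<bar>) ` ({..<beta} \<times> {..<beta})" by auto
    then show ?thesis by (rule finite_subset) auto
  qed
  have g0: "g \<ge> 0" unfolding g_def gamma_def using fin by simp
  have Dpos: "\<bar>mu r - mu q\<bar> > 0" if "r < beta" "q < beta" "r \<noteq> q" for r q
    using means_distinct that by (auto simp: inj_on_def)
  have gD: "\<bar>mu q - nu q\<bar> \<le> g * \<bar>mu r - mu q\<bar>" if "r < beta" "q < beta" "r \<noteq> q" for r q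
  proof -
    have "Delta mu nu q / \<bar>mu r - mu q\<bar> \<le> g" unfolding g_def gamma_def
      using fin that by (intro Max_ge) auto
    then show ?thesis using Dpos[OF that] by (simp add: Delta_def field_simps)
  qed
  have gD': "\<bar>mu q - nu q\<bar> \<le> g * \<bar>mu q - mu r\<bar>" if "r < beta" "q < beta" "r \<noteq> q" for r q
    using gD[OF that] abs_minus_commute[of "mu r" "mu q"] by simp
  have a0: "a > 0" using gamma_small by (simp add: a_def g_def)
  have n0: "n \<ge> 0" by (simp add: n_def)
  have D0le: "D0 \<le> \<bar>mu r - mu s\<bar>" if "r < beta" "r \<noteq> s" for r
    using sep that by (simp add: D0_def phi_def n_def phi_star_def)
  have goal: "2 / ((1 - 4 * g) * c) = 1 / (a * c)" by (simp add: a_def)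
  have Sle: "\<bar>x i - nu r\<bar> \<le> \<bar>x i - nu q\<bar>" if "i \<in> S x nu beta N r" "q < beta" for i r q
    using that by (simp add: S_def)
  have finR: "finite R" by (simp add: R_def)
  have basic: "(1 - 2 * g) * \<bar>mu r - mu q\<bar> \<le> 2 * \<bar>x i - mu r\<bar>"
    if "i \<in> S x nu beta N q" "r < beta" "q < beta" "r \<noteq> q" for i r q
  proof -
    have "\<bar>mu r - mu q\<bar> - 2 * (g * \<bar>mu r - mu q\<bar>) \<le> 2 * \<bar>x i - mu r\<bar>"
      by (rule geo1[OF Sle[OF that(1,2)] gD'[where r=q and q=r, OF that(3,2) that(4)[symmetric]] gD[OF that(2,3,4)]])
    then show ?thesis by (simp add: algebra_simps)
  qed
  have basic2: "a * D0 \<le> \<bar>x i - mu r\<bar> \<and> \<bar>x i - mu r\<bar> > 0"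
    if "i \<in> S x nu beta N q" "r < beta" "q < beta" "r \<noteq> q" "r = s \<or> q = s" for i r q
  proof -
    have Dp: "\<bar>mu r - mu q\<bar> > 0" using Dpos that by auto
    have "D0 \<le> \<bar>mu r - mu q\<bar>"
    proof (cases "q = s")
      case True then show ?thesis using D0le[of r] that by simp
    next
      case False then show ?thesis using D0le[of q] that abs_minus_commute[of "mu r" "mu q"] by simp
    qed
    then have "a * D0 \<le> a * \<bar>mu r - mu q\<bar>" using a0 by simp
    also have "\<dots> \<le> (1 - 2 * g) * \<bar>mu r - mu q\<bar> / 2" using g0 Dp by (simp add: a_def field_simps)
    finally have 1: "a * D0 \<le> (1 - 2 * g) * \<bar>mu r - mu q\<bar> / 2" .
    have "1 - 2 * g > 0" using gamma_small g_def by simp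
    then have "(1 - 2 * g) * \<bar>mu r - mu q\<bar> > 0" using Dp by simp
    moreover note 1 basic[OF that(1-4)]
    ultimately have "a * D0 \<le> \<bar>x i - mu r\<bar>" "0 < \<bar>x i - mu r\<bar>"
      using half_chain by blast+
    then show ?thesis by simp
  qed
  have part_in: "rho_in x lab nu beta N s \<le> 1 / (a * c)"
  proof -
    have eq: "rho_in x lab nu beta N s = (\<Sum>r\<in>R. real (card (T lab N r \<inter> S x nu beta N s))) / n"
      by (simp add: rho_in_def R_def n_def)
    show ?thesis unfolding eq
    proof (rule finish[OF finR, where mu=mu and x=x and lab=lab])
      show "\<forall>r\<in>R. T lab N r \<inter> S x nu beta N s \<subseteq> {..<N}" by (auto simp: T_def)
      have pt: "real (card {r \<in> R. i \<in> T lab N r \<inter> S x nu beta N s}) * (a * D0) \<le> \<bar>x i - mu (lab i)\<bar>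
         \<and> (card {r \<in> R. i \<in> T lab N r \<inter> S x nu beta N s} > 0 \<longrightarrow> 0 < \<bar>x i - mu (lab i)\<bar>)"
        if "i < N" for i
      proof (cases "lab i \<noteq> s \<and> i \<in> S x nu beta N s")
        case True
        have E: "{r \<in> R. i \<in> T lab N r \<inter> S x nu beta N s} = {lab i}"
          using True that lab_range by (auto simp: R_def T_def)
        show ?thesis by (subst E)+ (use basic2[of i s "lab i"] True that lab_range s_range in auto)
      next
        case False
        have E: "{r \<in> R. i \<in> T lab N r \<inter> S x nu beta N s} = {}"
          using False that by (auto simp: R_def T_def)
        show ?thesis by (subst E)+ simp
      qed
      show "\<forall>i<N. real (card {r \<in> R. i \<in> T lab N r \<inter> S x nu beta N s}) *
          (a * (c * (\<Sum>i<N. \<bar>x i - mu (lab i)\<bar>) / n)) \<le> \<bar>x i - mu (lab i)\<bar>"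
        using pt unfolding D0_def phi_def by blast
      show "\<forall>i<N. 0 < card {r \<in> R. i \<in> T lab N r \<inter> S x nu beta N s} \<longrightarrow> 0 < \<bar>x i - mu (lab i)\<bar>"
        using pt by blast
    qed (use a0 c_pos n0 in auto)
  qed
  have part_out: "rho_out x lab nu beta N s \<le> 1 / (a * c)"
  proof -
    have eq: "rho_out x lab nu beta N s = (\<Sum>r\<in>R. real (card (T lab N s \<inter> S x nu beta N r))) / n"
      by (simp add: rho_out_def R_def n_def)
    have pt: "real (card {r \<in> R. i \<in> T lab N s \<inter> S x nu beta N r}) * (a * D0) \<le> \<bar>x i - mu (lab i)\<bar>
       \<and> (card {r \<in> R. i \<in> T lab N s \<inter> S x nu beta N r} > 0 \<longrightarrow> 0 < \<bar>x i - mu (lab i)\<bar>)"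
      if "i < N" for i
    proof (cases "lab i = s")
      case False
      have E: "{r \<in> R. i \<in> T lab N s \<inter> S x nu beta N r} = {}" using False by (auto simp: T_def)
      show ?thesis by (subst E)+ simp
    next
      case True
      define C where "C = {r \<in> R. i \<in> S x nu beta N r}"
      have Ceq: "{r \<in> R. i \<in> T lab N s \<inter> S x nu beta N r} = C"
        using True that by (auto simp: C_def T_def)
      have Cb: "a * D0 \<le> \<bar>x i - mu s\<bar> \<and> \<bar>x i - mu s\<bar> > 0" if "r \<in> C" for r
        using basic2[of i r s] that s_range by (auto simp: C_def R_def)
      have nudist: "nu r \<noteq> nu q" if "r < beta" "q < beta" "r \<noteq> q" for r q
      proof -
        have "\<bar>mu r - mu q\<bar> > 0" using Dpos that by auto
        moreover have "\<bar>mu r - nu r\<bar> \<le> g * \<bar>mu r - mu q\<bar>" using gD'[OF that(2,1)] that by auto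
        moreover have "\<bar>mu q - nu q\<bar> \<le> g * \<bar>mu r - mu q\<bar>" using gD[OF that] by auto
        moreover have "g * \<bar>mu r - mu q\<bar> < \<bar>mu r - mu q\<bar> / 2" using gamma_small g_def calculation(1) by simp
        ultimately show ?thesis using nd_lemma by blast
      qed
      have eqd: "\<bar>x i - nu r\<bar> = \<bar>x i - nu q\<bar>" if "r \<in> C" "q \<in> C" for r q
        using Sle[of i r q] Sle[of i q r] that by (auto simp: C_def R_def)
      have two: "2 * (a * D0) \<le> \<bar>x i - mu s\<bar>" if tw: "r \<in> C" "q \<in> C" "r \<noteq> q" for r q
      proof -
        have rb: "r < beta" "r \<noteq> s" "q < beta" "q \<noteq> s" using that by (auto simp: C_def R_def)
        have le: "\<bar>x i - nu r\<bar> \<le> \<bar>x i - nu s\<bar>" using that Sle s_range by (auto simp: C_def)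
        obtain p where p: "p \<in> {r, q}" "\<bar>x i - nu s\<bar> \<ge> \<bar>nu p - nu s\<bar>"
          using geo2[OF eqd[OF tw(1,2)] nudist[OF rb(1,3) tw(3)] le] by auto
        have pb: "p < beta" "p \<noteq> s" using p(1) rb by auto
        have "\<bar>mu p - mu s\<bar> > 0" using Dpos pb s_range by auto
        have h1: "\<bar>mu p - nu p\<bar> \<le> g * \<bar>mu p - mu s\<bar>" using gD'[OF s_range pb(1)] pb by auto
        have h2: "\<bar>mu s - nu s\<bar> \<le> g * \<bar>mu p - mu s\<bar>" using gD[OF pb(1) s_range pb(2)] by auto
        have "(1 - 3 * g) * \<bar>mu p - mu s\<bar> \<le> \<bar>x i - mu s\<bar>"
          using geo4[OF p(2) h1 h2] by (simp add: algebra_simps)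
        moreover have "2 * (a * D0) \<le> (1 - 4 * g) * \<bar>mu p - mu s\<bar>"
          using D0le[OF pb] a0 by (simp add: a_def)
        moreover have "(1 - 4 * g) * \<bar>mu p - mu s\<bar> \<le> (1 - 3 * g) * \<bar>mu p - mu s\<bar>"
          using g0 by (intro mult_right_mono) auto
        ultimately show ?thesis by linarith
      qed
      have three: False if "r \<in> C" "q \<in> C" "p \<in> C" "r \<noteq> q" "r \<noteq> p" "q \<noteq> p" for r q p
      proof -
        have rb: "r < beta" "q < beta" "p < beta" using that by (auto simp: C_def R_def)
        show False
          using geo3[OF eqd[OF that(1,2)] eqd[OF that(1,3)] nudist[OF rb(1,2) that(4)]
              nudist[OF rb(1,3) that(5)] nudist[OF rb(2,3) that(6)]] .
      qed
      have finC: "finite C" by (simp add: C_def R_def)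
      have main: "real (card C) * (a * D0) \<le> \<bar>x i - mu s\<bar> \<and> (card C > 0 \<longrightarrow> 0 < \<bar>x i - mu s\<bar>)"
      proof (cases "C = {}")
        case True then show ?thesis by simp
      next
        case False
        then obtain r where r: "r \<in> C" by auto
        show ?thesis
        proof (cases "C = {r}")
          case True then show ?thesis using Cb[OF r] by simp
        next
          case False
          then obtain q where q: "q \<in> C" "q \<noteq> r" using r by auto
          have "C = {r, q}" using three r q by blast
          then have "card C = 2" using q by simp
          then show ?thesis using two[OF r q(1) q(2)[symmetric]] Cb[OF r] by simp
        qed
      qed
      show ?thesis by (subst Ceq)+ (use main True in simp)
    qed
    show ?thesis unfolding eq
    proof (rule finish[OF finR, where mu=mu and x=x and lab=lab])
      show "\<forall>r\<in>R. T lab N s \<inter> S x nu beta N r \<subseteq> {..<N}" by (auto simp: T_def)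
      show "\<forall>i<N. real (card {r \<in> R. i \<in> T lab N s \<inter> S x nu beta N r}) *
          (a * (c * (\<Sum>i<N. \<bar>x i - mu (lab i)\<bar>) / n)) \<le> \<bar>x i - mu (lab i)\<bar>"
        using pt unfolding D0_def phi_def by blast
      show "\<forall>i<N. 0 < card {r \<in> R. i \<in> T lab N s \<inter> S x nu beta N r} \<longrightarrow> 0 < \<bar>x i - mu (lab i)\<bar>"
        using pt by blast
    qed (use a0 c_pos n0 in auto)
  qed
  show ?thesis using part_in part_out goal by (simp add: g_def)
qed

end
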